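(* Let $R$ be a commutative ring in which $2$ is invertible, $I$ an ideal of $R$, let $Q=R$ with quadratic form $q(z)=z^2$, and let $m\ge1$. Identify automorphisms of $Q\perp\mathbb{H}(R)^m$ with matrices in $\mathrm{GL}_{2m+1}(R)$ via the ordered basis $(1,x_1,f_1,\dots,x_m,f_m)$. Then $\mathrm{EO}_{(R,I)}(Q,\mathbb{H}(R)^m)=\mathrm{EO}_{2m+1}(R,I)$.
   Context: For a quadratic form $q$ the bilinear form is $\langle x,y\rangle=q(x+y)-q(x)-q(y)$; on $Q=R$, $\langle z,z'\rangle=2zz'$. $\mathbb{H}(R)^m=\mathbb{H}(R^m)=R^m\oplus(R^m)^*$ with basis $x_1,\dots,x_m$, dual basis $f_1,\dots,f_m$, and $q(y,g)=g(y)$; orthogonal sums carry the sum of forms. With respect to the basis above the form has matrix $(2)\perp\widetilde{\psi}_m$, where $\widetilde{\psi}_s=\sum_{i=1}^s(e_{2i-1,2i}+e_{2i,2i-1})$ and $e_{i,j}$ are matrix units. DSER transformations on $Q\perp\mathbb{H}(P)$: for $\alpha:Q\to P$ let $\alpha^*:P^*\to Q$ satisfy $\langle\alpha^*(g),z\rangle=g(\alpha(z))$, $E_\alpha(z,y,g)=(z-\alpha^*(g),y+\alpha(z)-\tfrac12\alpha\alpha^*(g),g)$; for $\beta:Q\to P^*$ let $\beta^*:P\to Q$ satisfy $\langle\beta^*(y),z\rangle=\beta(z)(y)$, $E^*_\beta(z,y,g)=(z-\beta^*(y),y,g+\beta(z)-\tfrac12\beta\beta^*(y))$. $\mathrm{EO}_R(Q,\mathbb{H}(P))$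 is generated by all $E_\alpha,E^*_\beta$; $\mathrm{EO}_I(Q,\mathbb{H}(P))$ by those with $\alpha(Q)\subseteq IP$, $\beta(Q)\subseteq IP^*$; $\mathrm{EO}_{(R,I)}(Q,\mathbb{H}(P))$ is the normal closure of $\mathrm{EO}_I(Q,\mathbb{H}(P))$ in $\mathrm{EO}_R(Q,\mathbb{H}(P))$. Odd elementary orthogonal group: for $N=2s+1$ and $1\le i\le s$, $F^1_i(\lambda)=I_N+\lambda(e_{1,2i+1}-2e_{2i,1}-\lambda e_{2i,2i+1})$, $F^2_i(\lambda)=I_N+\lambda(e_{1,2i}-2e_{2i+1,1}-\lambda e_{2i+1,2i})$. $\mathrm{EO}_{2s+1}(R)$ is generated by these with $\lambda\in R$, $\mathrm{EO}_{2s+1}(I)$ by those with $\lambda\in I$, and $\mathrm{EO}_{2s+1}(R,I)$ is the normal closure of $\mathrm{EO}_{2s+1}(I)$ in $\mathrm{EO}_{2s+1}(R)$. *)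

theory Defs
  imports "Jordan_Normal_Form.Matrix"
begin

definition is_ideal :: "'a::comm_ring_1 set \<Rightarrow> bool" where
  "is_ideal I \<longleftrightarrow> 0 \<in> I \<and> (\<forall>x\<in>I. \<forall>y\<in>I. x + y \<in> I) \<and> (\<forall>r x. x \<in> I \<longrightarrow> r * x \<in> I)"

definition qQ :: "'a::comm_ring_1 \<Rightarrow> 'a" where
  "qQ z = z * z"

definition bilQ :: "'a::comm_ring_1 \<Rightarrow> 'a \<Rightarrow> 'a" where
  "bilQ z z' = qQ (z + z') - qQ z - qQ z'"

text \<open>P = R^m: vectors y :: nat => 'a with coordinates y i, i in {1..m}, zero elsewhere
  (coordinates w.r.t. x_1..x_m).  Elements of P^* are represented by their
  coordinates g i = g(x_i) w.r.t. the dual basis f_1..f_m, also supported on {1..m}.\<close>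
definition Pm :: "nat \<Rightarrow> (nat \<Rightarrow> 'a::zero) set" where
  "Pm m = {y. \<forall>i. i \<notin> {1..m} \<longrightarrow> y i = 0}"

definition pair :: "nat \<Rightarrow> (nat \<Rightarrow> 'a::comm_ring_1) \<Rightarrow> (nat \<Rightarrow> 'a) \<Rightarrow> 'a" where
  "pair m g y = (\<Sum>i=1..m. g i * y i)"

definition lin_map :: "nat \<Rightarrow> ('a::comm_ring_1 \<Rightarrow> (nat \<Rightarrow> 'a)) \<Rightarrow> bool" where
  "lin_map m \<alpha> \<longleftrightarrow> (\<forall>z. \<alpha> z \<in> Pm m) \<and>
     (\<forall>r z z'. \<alpha> (r * z + z') = (\<lambda>i. r * \<alpha> z i + \<alpha> z' i))"

definition adj_alpha :: "nat \<Rightarrow> ('a::comm_ring_1 \<Rightarrow> (nat \<Rightarrow> 'a)) \<Rightarrow> (nat \<Rightarrow> 'a) \<Rightarrow> 'a" where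
  "adj_alpha m \<alpha> g = (THE w. \<forall>z. bilQ w z = pair m g (\<alpha> z))"

definition adj_beta :: "nat \<Rightarrow> ('a::comm_ring_1 \<Rightarrow> (nat \<Rightarrow> 'a)) \<Rightarrow> (nat \<Rightarrow> 'a) \<Rightarrow> 'a" where
  "adj_beta m \<beta> y = (THE w. \<forall>z. bilQ w z = pair m (\<beta> z) y)"

text \<open>The element 1/2 of R (2 is assumed invertible).\<close>
definition half :: "'a::comm_ring_1" where
  "half = (THE u. 2 * u = 1)"

type_synonym 'a qelem = "'a \<times> (nat \<Rightarrow> 'a) \<times> (nat \<Rightarrow> 'a)"

definition E_alpha :: "nat \<Rightarrow> ('a::comm_ring_1 \<Rightarrow> (nat \<Rightarrow> 'a)) \<Rightarrow> 'a qelem \<Rightarrow> 'a qelem" where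
  "E_alpha m \<alpha> v = (case v of (z, y, g) \<Rightarrow>
     (z - adj_alpha m \<alpha> g,
      (\<lambda>i. y i + \<alpha> z i - half * \<alpha> (adj_alpha m \<alpha> g) i),
      g))"

definition E_beta :: "nat \<Rightarrow> ('a::comm_ring_1 \<Rightarrow> (nat \<Rightarrow> 'a)) \<Rightarrow> 'a qelem \<Rightarrow> 'a qelem" where
  "E_beta m \<beta> v = (case v of (z, y, g) \<Rightarrow>
     (z - adj_beta m \<beta> y,
      y,
      (\<lambda>i. g i + \<beta> z i - half * \<beta> (adj_beta m \<beta> y) i)))"

text \<open>Ordered basis, 0-based: index 0 is 1 \<in> Q, index 2i-1 is x_i, index 2i is f_i.\<close>
definition basis_el :: "nat \<Rightarrow> 'a::comm_ring_1 qelem" where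
  "basis_el j = (if j = 0 then (1, (\<lambda>_. 0), (\<lambda>_. 0))
                 else if odd j then (0, (\<lambda>i. if i = (j + 1) div 2 then 1 else 0), (\<lambda>_. 0))
                 else (0, (\<lambda>_. 0), (\<lambda>i. if i = j div 2 then 1 else 0)))"

definition coord :: "nat \<Rightarrow> 'a::comm_ring_1 qelem \<Rightarrow> 'a" where
  "coord j v = (case v of (z, y, g) \<Rightarrow>
     (if j = 0 then z else if odd j then y ((j + 1) div 2) else g (j div 2)))"

definition mat_of_map :: "nat \<Rightarrow> ('a::comm_ring_1 qelem \<Rightarrow> 'a qelem) \<Rightarrow> 'a mat" where
  "mat_of_map m \<phi> = mat (2*m+1) (2*m+1) (\<lambda>(i, j). coord i (\<phi> (basis_el j)))"

inductive_set gen_grp :: "nat \<Rightarrow> 'a::comm_ring_1 mat set \<Rightarrow> 'a mat set" for n S where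
  gen_one: "1\<^sub>m n \<in> gen_grp n S"
| gen_mul: "A \<in> S \<Longrightarrow> X \<in> gen_grp n S \<Longrightarrow> A * X \<in> gen_grp n S"
| gen_inv: "A \<in> S \<Longrightarrow> B \<in> carrier_mat n n \<Longrightarrow> A * B = 1\<^sub>m n \<Longrightarrow> B * A = 1\<^sub>m n \<Longrightarrow>
            X \<in> gen_grp n S \<Longrightarrow> B * X \<in> gen_grp n S"

definition normal_closure :: "nat \<Rightarrow> 'a::comm_ring_1 mat set \<Rightarrow> 'a mat set \<Rightarrow> 'a mat set" where
  "normal_closure n G H = gen_grp n {g * h * g' | g h g'. g \<in> G \<and> h \<in> H \<and>
       g' \<in> carrier_mat n n \<and> g * g' = 1\<^sub>m n \<and> g' * g = 1\<^sub>m n}"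

definition EO_DSER :: "nat \<Rightarrow> 'a::comm_ring_1 set \<Rightarrow> 'a mat set" where
  "EO_DSER m J = gen_grp (2*m+1)
     ({mat_of_map m (E_alpha m \<alpha>) | \<alpha>. lin_map m \<alpha> \<and> (\<forall>z i. \<alpha> z i \<in> J)} \<union>
      {mat_of_map m (E_beta m \<beta>) | \<beta>. lin_map m \<beta> \<and> (\<forall>z i. \<beta> z i \<in> J)})"

definition EO_DSER_rel :: "nat \<Rightarrow> 'a::comm_ring_1 set \<Rightarrow> 'a mat set" where
  "EO_DSER_rel m I = normal_closure (2*m+1) (EO_DSER m UNIV) (EO_DSER m I)"

text \<open>Matrix unit e_{a,b} with 1-based indices a, b.\<close>
definition emat :: "nat \<Rightarrow> nat \<Rightarrow> nat \<Rightarrow> 'a::comm_ring_1 mat" where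
  "emat N a b = mat N N (\<lambda>(i, j). if i = a - 1 \<and> j = b - 1 then 1 else 0)"

definition F1 :: "nat \<Rightarrow> nat \<Rightarrow> 'a::comm_ring_1 \<Rightarrow> 'a mat" where
  "F1 N i l = 1\<^sub>m N + l \<cdot>\<^sub>m (emat N 1 (2*i+1) - 2 \<cdot>\<^sub>m emat N (2*i) 1 - l \<cdot>\<^sub>m emat N (2*i) (2*i+1))"

definition F2 :: "nat \<Rightarrow> nat \<Rightarrow> 'a::comm_ring_1 \<Rightarrow> 'a mat" where
  "F2 N i l = 1\<^sub>m N + l \<cdot>\<^sub>m (emat N 1 (2*i) - 2 \<cdot>\<^sub>m emat N (2*i+1) 1 - l \<cdot>\<^sub>m emat N (2*i+1) (2*i))"

definition EO_odd :: "nat \<Rightarrow> 'a::comm_ring_1 set \<Rightarrow> 'a mat set" where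
  "EO_odd s J = gen_grp (2*s+1)
     ({F1 (2*s+1) i l | i l. 1 \<le> i \<and> i \<le> s \<and> l \<in> J} \<union>
      {F2 (2*s+1) i l | i l. 1 \<le> i \<and> i \<le> s \<and> l \<in> J})"

definition EO_odd_rel :: "nat \<Rightarrow> 'a::comm_ring_1 set \<Rightarrow> 'a mat set" where
  "EO_odd_rel s I = normal_closure (2*s+1) (EO_odd s UNIV) (EO_odd s I)"

end

theory Submission
  imports Defs
begin


definition invset :: "nat \<Rightarrow> 'a::comm_ring_1 mat set \<Rightarrow> bool" where
  "invset n S \<longleftrightarrow> S \<subseteq> carrier_mat n n \<and>
     (\<forall>A\<in>S. \<exists>B\<in>carrier_mat n n. A * B = 1\<^sub>m n \<and> B * A = 1\<^sub>m n)"

lemma gg_carrier: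
  assumes S: "S \<subseteq> carrier_mat n n" and X: "X \<in> gen_grp n S"
  shows "X \<in> carrier_mat n n"
  using X by induction (use S in auto)

lemma gg_mult:
  assumes S: "S \<subseteq> carrier_mat n n" and X: "X \<in> gen_grp n S" and Y: "Y \<in> gen_grp n S"
  shows "X * Y \<in> gen_grp n S"
  using X
proof induction
  case gen_one
  then show ?case using Y gg_carrier[OF S Y] by simp
next
  case (gen_mul A X)
  have "A * X * Y = A * (X * Y)"
    using gen_mul S gg_carrier[OF S] Y by (intro assoc_mult_mat) auto
  then show ?case using gen_mul by (simp add: gen_grp.gen_mul)
next
  case (gen_inv A B X)
  have "B * X * Y = B * (X * Y)"
    using gen_inv S gg_carrier[OF S] Y by (intro assoc_mult_mat) auto
  then show ?case using gen_inv by (simp add: gen_grp.gen_inv)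
qed



lemma gg_inv:
  assumes S: "invset n S" and X: "X \<in> gen_grp n S"
  shows "\<exists>X'\<in>gen_grp n S. X * X' = 1\<^sub>m n \<and> X' * X = 1\<^sub>m n"
  using X
proof induction
  case gen_one
  then show ?case by (intro bexI[of _ "1\<^sub>m n"]) (auto intro: gen_grp.gen_one)
next
  case (gen_mul A X)
  then obtain X' where X': "X' \<in> gen_grp n S" "X * X' = 1\<^sub>m n" "X' * X = 1\<^sub>m n" by blast
  have Sc: "S \<subseteq> carrier_mat n n" using S unfolding invset_def by auto
  have Xc: "X \<in> carrier_mat n n" "X' \<in> carrier_mat n n" using gg_carrier[OF Sc] gen_mul X' by auto
  have Ac: "A \<in> carrier_mat n n" using gen_mul Sc by auto
  obtain B where B: "B \<in> carrier_mat n n" "A * B = 1\<^sub>m n" "B * A = 1\<^sub>m n"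
    using S gen_mul unfolding invset_def by blast
  have Bg: "B \<in> gen_grp n S" using gen_grp.gen_inv[OF gen_mul(1) B gen_grp.gen_one] B by simp
  have 1: "A * X * (X' * B) = 1\<^sub>m n"
  proof -
    have "A * X * (X' * B) = A * (X * X') * B" using Ac Xc B by (simp add: assoc_mult_mat[of _ n n _ n _ n])
    then show ?thesis using X' B Ac by simp
  qed
  have 2: "X' * B * (A * X) = 1\<^sub>m n"
  proof -
    have "X' * B * (A * X) = X' * (B * (A * X))" using Ac Xc B by (simp add: assoc_mult_mat[of _ n n _ n _ n])
    also have "B * (A * X) = (B * A) * X" using Ac Xc B by (metis assoc_mult_mat)
    finally show ?thesis using X' B Xc by simp
  qed
  show ?case using 1 2 gg_mult[OF Sc X'(1) Bg] by blast
next
  case (gen_inv A B X)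
  then obtain X' where X': "X' \<in> gen_grp n S" "X * X' = 1\<^sub>m n" "X' * X = 1\<^sub>m n" by blast
  have Sc: "S \<subseteq> carrier_mat n n" using S unfolding invset_def by auto
  have Xc: "X \<in> carrier_mat n n" "X' \<in> carrier_mat n n" using gg_carrier[OF Sc] gen_inv X' by auto
  have Ac: "A \<in> carrier_mat n n" using gen_inv Sc by auto
  have Ag: "A \<in> gen_grp n S" using gen_grp.gen_mul[OF gen_inv(1) gen_grp.gen_one[of n S]] Ac by simp
  have 1: "B * X * (X' * A) = 1\<^sub>m n"
  proof -
    have "B * X * (X' * A) = B * (X * X') * A" using Ac Xc gen_inv by (simp add: assoc_mult_mat[of _ n n _ n _ n])
    then show ?thesis using X' gen_inv Ac by simp
  qed
  have 2: "X' * A * (B * X) = 1\<^sub>m n"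
  proof -
    have "X' * A * (B * X) = X' * (A * (B * X))" using Ac Xc gen_inv by (simp add: assoc_mult_mat[of _ n n _ n _ n])
    also have "A * (B * X) = (A * B) * X" using Ac Xc gen_inv by (metis assoc_mult_mat)
    finally show ?thesis using X' gen_inv Xc by simp
  qed
  show ?case using 1 2 gg_mult[OF Sc X'(1) Ag] by blast
qed

lemma gg_sub:
  assumes T: "invset n T" and S: "S \<subseteq> gen_grp n T" and Sc: "S \<subseteq> carrier_mat n n"
  shows "gen_grp n S \<subseteq> gen_grp n T"
proof
  fix X assume "X \<in> gen_grp n S"
  then show "X \<in> gen_grp n T"
  proof induction
    case gen_one then show ?case by (rule gen_grp.gen_one)
  next
    case (gen_mul A X) then show ?case using gg_mult[of T n A X] T S unfolding invset_def by auto
  next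
    case (gen_inv A B X)
    have Tc: "T \<subseteq> carrier_mat n n" using T unfolding invset_def by auto
    have Ag: "A \<in> gen_grp n T" using gen_inv S by auto
    obtain A' where A': "A' \<in> gen_grp n T" "A * A' = 1\<^sub>m n" "A' * A = 1\<^sub>m n" using gg_inv[OF T Ag] by blast
    have Ac: "A \<in> carrier_mat n n" "A' \<in> carrier_mat n n" using gg_carrier[OF Tc] Ag A' by auto
    have "B = B * (A * A')" using A' gen_inv by simp
    also have "\<dots> = (B * A) * A'" using Ac gen_inv by (metis assoc_mult_mat)
    also have "\<dots> = A'" using gen_inv Ac by simp
    finally show ?case using gg_mult[OF Tc _ gen_inv(6)] A' by simp
  qed
qed

lemma gg_mono:
  assumes "S \<subseteq> T" shows "gen_grp n S \<subseteq> gen_grp n T"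
proof
  fix X assume "X \<in> gen_grp n S"
  then show "X \<in> gen_grp n T"
    by induction (use assms in \<open>auto intro: gen_grp.intros\<close>)
qed



definition Mset :: "nat \<Rightarrow> 'a::comm_ring_1 qelem set" where
  "Mset m = {v. fst (snd v) \<in> Pm m \<and> snd (snd v) \<in> Pm m}"

definition qadd :: "'a::comm_ring_1 qelem \<Rightarrow> 'a qelem \<Rightarrow> 'a qelem" where
  "qadd u v = (fst u + fst v, \<lambda>i. fst (snd u) i + fst (snd v) i, \<lambda>i. snd (snd u) i + snd (snd v) i)"

definition qsc :: "'a::comm_ring_1 \<Rightarrow> 'a qelem \<Rightarrow> 'a qelem" where
  "qsc c v = (c * fst v, \<lambda>i. c * fst (snd v) i, \<lambda>i. c * snd (snd v) i)"

definition qsum :: "(nat \<Rightarrow> 'a::comm_ring_1 qelem) \<Rightarrow> nat set \<Rightarrow> 'a qelem" where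
  "qsum f A = ((\<Sum>k\<in>A. fst (f k)), \<lambda>i. \<Sum>k\<in>A. fst (snd (f k)) i, \<lambda>i. \<Sum>k\<in>A. snd (snd (f k)) i)"

definition qlin :: "('a::comm_ring_1 qelem \<Rightarrow> 'a qelem) \<Rightarrow> bool" where
  "qlin \<phi> \<longleftrightarrow> (\<forall>u v. \<phi> (qadd u v) = qadd (\<phi> u) (\<phi> v)) \<and> (\<forall>c v. \<phi> (qsc c v) = qsc c (\<phi> v))"

lemma coord_alt: "coord j v = (if j = 0 then fst v else if odd j then fst (snd v) ((j + 1) div 2) else snd (snd v) (j div 2))"
  by (cases v) (simp add: coord_def)

lemma coord_qsum: "coord i (qsum f A) = (\<Sum>k\<in>A. coord i (f k))"
  by (simp add: coord_alt qsum_def)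

lemma coord_qsc: "coord i (qsc c v) = c * coord i v"
  by (simp add: coord_alt qsc_def)

lemma qlin_qsum:
  assumes "qlin \<phi>" "finite A"
  shows "\<phi> (qsum f A) = qsum (\<lambda>k. \<phi> (f k)) A"
  using assms(2)
proof induction
  case empty
  have A: "\<phi> (qsc c v) = qsc c (\<phi> v)" for c v using assms(1) unfolding qlin_def by blast
  have "qsum f {} = qsc 0 (0, \<lambda>_. 0, \<lambda>_. 0)" by (simp add: qsum_def qsc_def)
  then have "\<phi> (qsum f {}) = qsc 0 (\<phi> (0, \<lambda>_. 0, \<lambda>_. 0))" using A by metis
  then show ?case by (simp add: qsum_def qsc_def)
next
  case (insert x F)
  have "qsum f (insert x F) = qadd (f x) (qsum f F)" using insert by (simp add: qsum_def qadd_def)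
  moreover have "qsum (\<lambda>k. \<phi> (f k)) (insert x F) = qadd (\<phi> (f x)) (qsum (\<lambda>k. \<phi> (f k)) F)"
    using insert by (simp add: qsum_def qadd_def)
  moreover have A: "\<phi> (qadd u v) = qadd (\<phi> u) (\<phi> v)" for u v using assms(1) unfolding qlin_def by blast
  ultimately show ?case using insert by metis
qed

lemma basis_y: "coord k v * fst (snd (basis_el k)) i = (if i \<ge> 1 \<and> k = 2*i - 1 then fst (snd v) i else 0)"
proof -
  have e: "(k \<noteq> 0 \<and> odd k \<and> i = (k + 1) div 2) \<longleftrightarrow> (i \<ge> 1 \<and> k = 2*i - 1)" by presburger
  show ?thesis
  proof (cases "i \<ge> 1 \<and> k = 2*i - 1")
    case True then have "k \<noteq> 0 \<and> odd k \<and> i = (k + 1) div 2" using e by blast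
    then show ?thesis using True by (simp add: basis_el_def coord_alt)
  next
    case False then have "\<not> (k \<noteq> 0 \<and> odd k \<and> i = (k + 1) div 2)" using e by blast
    then show ?thesis using False by (auto simp add: basis_el_def coord_alt)
  qed
qed

lemma basis_g: "coord k v * snd (snd (basis_el k)) i = (if i \<ge> 1 \<and> k = 2*i then snd (snd v) i else 0)"
proof -
  have e: "(k \<noteq> 0 \<and> even k \<and> i = k div 2) \<longleftrightarrow> (i \<ge> 1 \<and> k = 2*i)" by presburger
  show ?thesis
  proof (cases "i \<ge> 1 \<and> k = 2*i")
    case True then have "k \<noteq> 0 \<and> even k \<and> i = k div 2" using e by blast
    then show ?thesis using True by (simp add: basis_el_def coord_alt)
  next
    case False then have "\<not> (k \<noteq> 0 \<and> even k \<and> i = k div 2)" using e by blast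
    then show ?thesis using False by (auto simp add: basis_el_def coord_alt)
  qed
qed

lemma basis_z: "coord k v * fst (basis_el k) = (if k = 0 then fst v else 0)"
  by (auto simp: basis_el_def coord_alt)

lemma expand:
  assumes "v \<in> Mset m"
  shows "v = qsum (\<lambda>k. qsc (coord k v) (basis_el k)) {..<2*m+1}"
proof -
  have y: "fst (snd v) i = (\<Sum>k<2*m+1. coord k v * fst (snd (basis_el k)) i)" for i
  proof -
    have "(\<Sum>k<2*m+1. coord k v * fst (snd (basis_el k)) i) = (if 1 \<le> i \<and> 2*i - 1 < 2*m+1 then fst (snd v) i else 0)"
      unfolding basis_y by (cases "1 \<le> i") (simp_all add: sum.delta)
    moreover have "i \<notin> {1..m} \<Longrightarrow> fst (snd v) i = 0" "i \<notin> {1..m} \<Longrightarrow> snd (snd v) i = 0"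
      using assms unfolding Mset_def Pm_def by auto
    ultimately show ?thesis by (cases "i \<in> {1..m}") auto
  qed
  have g: "snd (snd v) i = (\<Sum>k<2*m+1. coord k v * snd (snd (basis_el k)) i)" for i
  proof -
    have "(\<Sum>k<2*m+1. coord k v * snd (snd (basis_el k)) i) = (if 1 \<le> i \<and> 2*i < 2*m+1 then snd (snd v) i else 0)"
      unfolding basis_g by (cases "1 \<le> i") (simp_all add: sum.delta)
    moreover have "i \<notin> {1..m} \<Longrightarrow> fst (snd v) i = 0" "i \<notin> {1..m} \<Longrightarrow> snd (snd v) i = 0"
      using assms unfolding Mset_def Pm_def by auto
    ultimately show ?thesis by (cases "i \<in> {1..m}") auto
  qed
  have z: "fst v = (\<Sum>k<2*m+1. coord k v * fst (basis_el k))"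
    unfolding basis_z by simp
  show ?thesis unfolding qsum_def qsc_def fst_conv snd_conv
    by (simp only: y[symmetric] g[symmetric] z[symmetric] prod.collapse)
qed

lemma lin_coord:
  assumes "qlin \<phi>" "v \<in> Mset m"
  shows "coord i (\<phi> v) = (\<Sum>k<2*m+1. coord i (\<phi> (basis_el k)) * coord k v)"
proof -
  have "\<phi> v = qsum (\<lambda>k. \<phi> (qsc (coord k v) (basis_el k))) {..<2*m+1}"
    using qlin_qsum[OF assms(1), of "{..<2*m+1}" "\<lambda>k. qsc (coord k v) (basis_el k)"] expand[OF assms(2)] by simp
  also have "\<dots> = qsum (\<lambda>k. qsc (coord k v) (\<phi> (basis_el k))) {..<2*m+1}"
    using assms(1) unfolding qlin_def by metis
  finally show ?thesis by (simp add: coord_qsum coord_qsc mult.commute)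
qed

lemma mat_mult:
  assumes "qlin \<phi>" "\<And>j. j < 2*m+1 \<Longrightarrow> \<psi> (basis_el j) \<in> Mset m"
  shows "mat_of_map m (\<phi> \<circ> \<psi>) = mat_of_map m \<phi> * mat_of_map m \<psi>"
proof (rule eq_matI)
  fix i j assume ij: "i < dim_row (mat_of_map m \<phi> * mat_of_map m \<psi>)" "j < dim_col (mat_of_map m \<phi> * mat_of_map m \<psi>)"
  then have i: "i < 2*m+1" and j: "j < 2*m+1" by (auto simp: mat_of_map_def)
  show "mat_of_map m (\<phi> \<circ> \<psi>) $$ (i, j) = (mat_of_map m \<phi> * mat_of_map m \<psi>) $$ (i, j)"
    using i j lin_coord[OF assms(1) assms(2)[OF j], of i]
    by (simp add: mat_of_map_def scalar_prod_def atLeast0LessThan)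
qed (auto simp: mat_of_map_def)



definition EA :: "nat \<Rightarrow> (nat \<Rightarrow> 'a::comm_ring_1) \<Rightarrow> 'a qelem \<Rightarrow> 'a qelem" where
  "EA m a v = (fst v - half * pair m (snd (snd v)) a,
     \<lambda>i. fst (snd v) i + fst v * a i - half * (half * pair m (snd (snd v)) a * a i), snd (snd v))"

definition EB :: "nat \<Rightarrow> (nat \<Rightarrow> 'a::comm_ring_1) \<Rightarrow> 'a qelem \<Rightarrow> 'a qelem" where
  "EB m b v = (fst v - half * pair m b (fst (snd v)), fst (snd v),
     \<lambda>i. snd (snd v) i + fst v * b i - half * (half * pair m b (fst (snd v)) * b i))"

lemma pair_add_l: "pair m (\<lambda>i. x i + y i) w = pair m x w + pair m y w"
  by (simp add: pair_def algebra_simps sum.distrib)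
lemma pair_add_r: "pair m w (\<lambda>i. x i + y i) = pair m w x + pair m w y"
  by (simp add: pair_def algebra_simps sum.distrib)
lemma pair_sc_l: "pair m (\<lambda>i. c * x i) w = c * pair m x w"
  by (simp add: pair_def sum_distrib_left algebra_simps)
lemma pair_sc_r: "pair m w (\<lambda>i. c * x i) = c * pair m w x"
  by (simp add: pair_def sum_distrib_left algebra_simps)
lemma pair_neg_l: "pair m (\<lambda>i. - x i) w = - pair m x w"
  by (simp add: pair_def sum_negf)
lemma pair_neg_r: "pair m w (\<lambda>i. - x i) = - pair m w x"
  by (simp add: pair_def sum_negf)

lemmas pair_lin = pair_add_l pair_add_r pair_sc_l pair_sc_r pair_neg_l pair_neg_r

lemma qlin_EA: "qlin (EA m a)"
  unfolding qlin_def EA_def qadd_def qsc_def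
  by (simp add: pair_lin algebra_simps)

lemma qlin_EB: "qlin (EB m a)"
  unfolding qlin_def EB_def qadd_def qsc_def
  by (simp add: pair_lin algebra_simps)

lemma EA_M: "a \<in> Pm m \<Longrightarrow> v \<in> Mset m \<Longrightarrow> EA m a v \<in> Mset m"
  by (simp add: EA_def Mset_def Pm_def)

lemma EB_M: "a \<in> Pm m \<Longrightarrow> v \<in> Mset m \<Longrightarrow> EB m a v \<in> Mset m"
  by (simp add: EB_def Mset_def Pm_def)

lemma basis_M: "j < 2*m+1 \<Longrightarrow> basis_el j \<in> Mset m"
  by (auto simp: basis_el_def Mset_def Pm_def; presburger)

lemma eq_by_h:
  fixes h :: "'a::comm_ring_1"
  assumes "2 * h = 1" "L - R = (2 * h - 1) * C"
  shows "L = R"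
  using assms by simp

lemma EA_y:
  assumes h: "2 * half = (1::'a::comm_ring_1)"
  shows "fst (snd ((EA m x \<circ> EA m y \<circ> EA m (\<lambda>j. half * y j) \<circ> EA m x
     \<circ> EA m (\<lambda>j. - (half * y j)) \<circ> EA m (\<lambda>j. - (x j :: 'a))) (z,u,g))) i = fst (snd (EA m (\<lambda>j. x j + y j) (z,u,g))) i"
  unfolding EA_def comp_def fst_conv snd_conv pair_lin
  apply (rule eq_by_h[OF h, where C = "(- (1 * half * half * half * y i * pair m g y) + - (1 * half * x i * pair m g x) + 1 * half * x i * pair m g y)"])
  by (simp add: algebra_simps)

lemma EA_z:
  shows "fst (((EA m x \<circ> EA m y \<circ> EA m (\<lambda>j. half * y j) \<circ> EA m x
     \<circ> EA m (\<lambda>j. - (half * y j)) \<circ> EA m (\<lambda>j. - (x j :: 'a::comm_ring_1))) (z,u,g))) = fst (EA m (\<lambda>j. x j + y j) (z,u,g))"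
  unfolding EA_def comp_def fst_conv snd_conv pair_lin
  by (simp add: algebra_simps)

lemma EA_decomp:
  assumes h: "2 * half = (1::'a::comm_ring_1)"
  shows "EA m (\<lambda>j. x j + y j) = EA m x \<circ> EA m y \<circ> EA m (\<lambda>j. half * y j) \<circ> EA m x
     \<circ> EA m (\<lambda>j. - (half * y j)) \<circ> EA m (\<lambda>j. - (x j :: 'a))"
proof (rule ext)
  fix v :: "'a qelem"
  obtain z u g where v: "v = (z, u, g)" by (cases v)
  have g: "snd (snd (EA m a w)) = snd (snd w)" for a w by (simp add: EA_def)
  show "EA m (\<lambda>j. x j + y j) v = (EA m x \<circ> EA m y \<circ> EA m (\<lambda>j. half * y j) \<circ> EA m x
     \<circ> EA m (\<lambda>j. - (half * y j)) \<circ> EA m (\<lambda>j. - x j)) v"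
    unfolding v using EA_y[OF h, of m x y z u g] EA_z[of m x y z u g]
    by (simp add: prod_eq_iff fun_eq_iff g)
qed
lemma EB_g:
  assumes h: "2 * half = (1::'a::comm_ring_1)"
  shows "snd (snd ((EB m x \<circ> EB m y \<circ> EB m (\<lambda>j. half * y j) \<circ> EB m x
     \<circ> EB m (\<lambda>j. - (half * y j)) \<circ> EB m (\<lambda>j. - (x j :: 'a))) (z,u,g))) i = snd (snd (EB m (\<lambda>j. x j + y j) (z,u,g))) i"
  unfolding EB_def comp_def fst_conv snd_conv pair_lin
  apply (rule eq_by_h[OF h, where C = "(- (1 * half * half * half * y i * pair m y u) + - (1 * half * x i * pair m x u) + 1 * half * x i * pair m y u)"])
  by (simp add: algebra_simps)

lemma EB_z:
  shows "fst (((EB m x \<circ> EB m y \<circ> EB m (\<lambda>j. half * y j) \<circ> EB m x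
     \<circ> EB m (\<lambda>j. - (half * y j)) \<circ> EB m (\<lambda>j. - (x j :: 'a::comm_ring_1))) (z,u,g))) = fst (EB m (\<lambda>j. x j + y j) (z,u,g))"
  unfolding EB_def comp_def fst_conv snd_conv pair_lin
  by (simp add: algebra_simps)

lemma EB_decomp:
  assumes h: "2 * half = (1::'a::comm_ring_1)"
  shows "EB m (\<lambda>j. x j + y j) = EB m x \<circ> EB m y \<circ> EB m (\<lambda>j. half * y j) \<circ> EB m x
     \<circ> EB m (\<lambda>j. - (half * y j)) \<circ> EB m (\<lambda>j. - (x j :: 'a))"
proof (rule ext)
  fix v :: "'a qelem"
  obtain z u g where v: "v = (z, u, g)" by (cases v)
  have g: "fst (snd (EB m a w)) = fst (snd w)" for a w by (simp add: EB_def)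
  show "EB m (\<lambda>j. x j + y j) v = (EB m x \<circ> EB m y \<circ> EB m (\<lambda>j. half * y j) \<circ> EB m x
     \<circ> EB m (\<lambda>j. - (half * y j)) \<circ> EB m (\<lambda>j. - x j)) v"
    unfolding v using EB_g[OF h, of m x y z u g] EB_z[of m x y z u g]
    by (simp add: prod_eq_iff fun_eq_iff g)
qed

lemma half_eq:
  assumes "\<exists>u::'a::comm_ring_1. 2 * u = 1"
  shows "2 * (half::'a) = 1"
proof -
  obtain u :: 'a where u: "2 * u = 1" using assms by blast
  have "\<exists>!u::'a. 2 * u = 1"
  proof (rule ex1I[of _ u])
    fix v :: 'a assume v: "2 * v = 1"
    have "v = v * (2 * u)" using u by simp
    also have "\<dots> = u * (2 * v)" by (simp add: algebra_simps)
    finally show "v = u" using v by simp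
  qed (rule u)
  then show ?thesis unfolding half_def by (rule theI')
qed

lemma bilQ_eq: "bilQ w z = 2 * w * (z::'a::comm_ring_1)"
  by (simp add: bilQ_def qQ_def algebra_simps)

lemma lin_map_eq:
  assumes "lin_map m \<alpha>"
  shows "\<alpha> z = (\<lambda>i. z * \<alpha> 1 i)"
proof -
  have l: "\<alpha> (r * z + z') = (\<lambda>i. r * \<alpha> z i + \<alpha> z' i)" for r z z' using assms unfolding lin_map_def by blast
  have "\<alpha> 0 = (\<lambda>i. \<alpha> 0 i + \<alpha> 0 i)" using l[of 1 0 0] by simp
  then have 0: "\<alpha> 0 = (\<lambda>i. 0)" by (metis add_cancel_right_right)
  show ?thesis using l[of z 1 0] 0 by simp
qed

lemma hh: "2 * half = (1::'a::comm_ring_1) \<Longrightarrow> 2 * (half * P) * z = z * (P::'a)"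
proof -
  assume h: "2 * half = (1::'a)"
  have "2 * (half * P) * z = z * P * (2 * half)" by (simp add: algebra_simps)
  then show ?thesis using h by simp
qed

lemma adj_alpha_eq:
  assumes h: "2 * half = (1::'a::comm_ring_1)" and l: "lin_map m \<alpha>"
  shows "adj_alpha m \<alpha> g = half * pair m g (\<alpha> (1::'a))"
proof -
  have p: "pair m g (\<alpha> z) = z * pair m g (\<alpha> 1)" for z
    by (subst lin_map_eq[OF l]) (simp add: pair_sc_r)
  show ?thesis unfolding adj_alpha_def
  proof (rule the_equality)
    show "\<forall>z. bilQ (half * pair m g (\<alpha> 1)) z = pair m g (\<alpha> z)"
    proof
      fix z show "bilQ (half * pair m g (\<alpha> 1)) z = pair m g (\<alpha> z)"
        unfolding p[of z] bilQ_eq by (rule hh[OF h])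
    qed
  next
    fix w assume "\<forall>z. bilQ w z = pair m g (\<alpha> z)"
    then have "2 * w = pair m g (\<alpha> 1)" using bilQ_eq[of w 1] by simp
    then have "half * (2 * w) = half * pair m g (\<alpha> 1)" by simp
    moreover have "half * (2 * w) = w * (2 * half)" by (simp add: algebra_simps)
    ultimately show "w = half * pair m g (\<alpha> 1)" using h by simp
  qed
qed

lemma adj_beta_eq:
  assumes h: "2 * half = (1::'a::comm_ring_1)" and l: "lin_map m \<beta>"
  shows "adj_beta m \<beta> y = half * pair m (\<beta> (1::'a)) y"
proof -
  have p: "pair m (\<beta> z) y = z * pair m (\<beta> 1) y" for z
    by (subst lin_map_eq[OF l]) (simp add: pair_sc_l)
  show ?thesis unfolding adj_beta_def
  proof (rule the_equality)
    show "\<forall>z. bilQ (half * pair m (\<beta> 1) y) z = pair m (\<beta> z) y"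
    proof
      fix z show "bilQ (half * pair m (\<beta> 1) y) z = pair m (\<beta> z) y"
        unfolding p[of z] bilQ_eq by (rule hh[OF h])
    qed
  next
    fix w assume "\<forall>z. bilQ w z = pair m (\<beta> z) y"
    then have "2 * w = pair m (\<beta> 1) y" using bilQ_eq[of w 1] by simp
    then have "half * (2 * w) = half * pair m (\<beta> 1) y" by simp
    moreover have "half * (2 * w) = w * (2 * half)" by (simp add: algebra_simps)
    ultimately show "w = half * pair m (\<beta> 1) y" using h by simp
  qed
qed

lemma E_alpha_EA:
  fixes \<alpha> :: "'a::comm_ring_1 \<Rightarrow> nat \<Rightarrow> 'a"
  assumes h: "2 * half = (1::'a::comm_ring_1)" and l: "lin_map m \<alpha>"
  shows "E_alpha m \<alpha> = EA m (\<alpha> 1)"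
proof (rule ext)
  fix v :: "'a qelem"
  obtain z y g where v: "v = (z, y, g)" by (cases v)
  have a: "\<alpha> = (\<lambda>z i. z * \<alpha> 1 i)" using lin_map_eq[OF l] by blast
  define a where "a = \<alpha> 1"
  have a': "\<alpha> = (\<lambda>z i. z * a i)" using a unfolding a_def .
  show "E_alpha m \<alpha> v = EA m (\<alpha> 1) v"
    unfolding v E_alpha_def EA_def adj_alpha_eq[OF h l] a_def[symmetric]
    unfolding a' by (simp add: algebra_simps)
qed

lemma E_beta_EB:
  fixes \<beta> :: "'a::comm_ring_1 \<Rightarrow> nat \<Rightarrow> 'a"
  assumes h: "2 * half = (1::'a::comm_ring_1)" and l: "lin_map m \<beta>"
  shows "E_beta m \<beta> = EB m (\<beta> 1)"
proof (rule ext)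
  fix v :: "'a qelem"
  obtain z y g where v: "v = (z, y, g)" by (cases v)
  have a: "\<beta> = (\<lambda>z i. z * \<beta> 1 i)" using lin_map_eq[OF l] by blast
  define a where "a = \<beta> 1"
  have a': "\<beta> = (\<lambda>z i. z * a i)" using a unfolding a_def .
  show "E_beta m \<beta> v = EB m (\<beta> 1) v"
    unfolding v E_beta_def EB_def adj_beta_eq[OF h l] a_def[symmetric]
    unfolding a' by (simp add: algebra_simps)
qed



lemma pair_delta: "j \<in> {1..m} \<Longrightarrow> pair m (\<lambda>t. if t = j then 1 else 0) a = a j"
proof -
  assume j: "j \<in> {1..m}"
  have "pair m (\<lambda>t. if t = j then 1 else 0) a = (\<Sum>t=1..m. if t = j then a t else 0)"
    unfolding pair_def by (rule sum.cong) auto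
  then show ?thesis using j by (simp add: sum.delta')
qed

lemma pair_delta': "j \<in> {1..m} \<Longrightarrow> pair m a (\<lambda>t. if t = j then 1 else 0) = a j"
proof -
  assume j: "j \<in> {1..m}"
  have "pair m a (\<lambda>t. if t = j then 1 else 0) = (\<Sum>t=1..m. if t = j then a t else 0)"
    unfolding pair_def by (rule sum.cong) auto
  then show ?thesis using j by (simp add: sum.delta')
qed

lemma pair_zero_l: "pair m (\<lambda>t. 0) a = 0" by (simp add: pair_def)
lemma pair_zero_r: "pair m a (\<lambda>t. 0) = 0" by (simp add: pair_def)

lemma EA_entry:
  assumes q: "q < 2*m+1"
  shows "coord p (EA m a (basis_el q)) =
   (if q = 0 then (if p = 0 then 1 else if odd p then a ((p+1) div 2) else 0)
    else if odd q then (if p = q then 1 else 0)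
    else (if p = 0 then - (half * a (q div 2)) else if odd p then - (half * (half * a (q div 2) * a ((p+1) div 2)))
          else if p = q then 1 else 0))"
proof -
  consider "q = 0" | "odd q" | "q \<noteq> 0" "even q" by blast
  then show ?thesis
  proof cases
    case 1 then show ?thesis by (simp add: EA_def basis_el_def coord_alt pair_zero_l)
  next
    case 2
    then have "q \<noteq> 0" by (auto intro: odd_pos)
    have e: "odd p \<Longrightarrow> ((p + 1) div 2 = (q + 1) div 2) = (p = q)" using 2 by presburger
    show ?thesis using 2 `q \<noteq> 0` e by (auto simp add: EA_def basis_el_def coord_alt pair_zero_l)
  next
    case 3
    have j: "q div 2 \<in> {1..m}" using 3 q by auto
    have e: "even p \<Longrightarrow> p \<noteq> 0 \<Longrightarrow> (p div 2 = q div 2) = (p = q)" using 3 by presburger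
    show ?thesis using 3 e by (auto simp add: EA_def basis_el_def coord_alt pair_delta[OF j])
  qed
qed

lemma EB_entry:
  assumes q: "q < 2*m+1"
  shows "coord p (EB m a (basis_el q)) =
   (if q = 0 then (if p = 0 then 1 else if odd p then 0 else a (p div 2))
    else if odd q then (if p = 0 then - (half * a ((q+1) div 2)) else if odd p then (if p = q then 1 else 0)
          else - (half * (half * a ((q+1) div 2) * a (p div 2))))
    else (if p = q then 1 else 0))"
proof -
  consider "q = 0" | "odd q" | "q \<noteq> 0" "even q" by blast
  then show ?thesis
  proof cases
    case 1 then show ?thesis by (simp add: EB_def basis_el_def coord_alt pair_zero_r)
  next
    case 2
    then have "q \<noteq> 0" by (auto intro: odd_pos)
    have j: "Suc (q div 2) \<in> {1..m}" using 2 q by (simp; presburger)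
    have e: "odd p \<Longrightarrow> ((p + 1) div 2 = (q + 1) div 2) = (p = q)" using 2 by presburger
    show ?thesis using 2 `q \<noteq> 0` e by (auto simp add: EB_def basis_el_def coord_alt pair_delta'[OF j])
  next
    case 3
    have e: "even p \<Longrightarrow> p \<noteq> 0 \<Longrightarrow> (p div 2 = q div 2) = (p = q)" using 3 by presburger
    show ?thesis using 3 e by (auto simp add: EB_def basis_el_def coord_alt pair_zero_r)
  qed
qed

lemma emat_idx: "p < N \<Longrightarrow> q < N \<Longrightarrow> emat N a b $$ (p, q) = (if p = a - 1 \<and> q = b - 1 then 1 else 0)"
  by (simp add: emat_def)

lemma emat_dim[simp]: "dim_row (emat N a b) = N" "dim_col (emat N a b) = N"
  by (simp_all add: emat_def)

lemma F1_EA: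
  assumes h: "2 * half = (1::'a::comm_ring_1)" and i: "1 \<le> i" "i \<le> m"
  shows "F1 (2*m+1) i (- (half * c)) = mat_of_map m (EA m (\<lambda>j. if j = i then (c::'a) else 0))"
proof (rule eq_matI)
  fix p q assume "p < dim_row (mat_of_map m (EA m (\<lambda>j. if j = i then c else 0)))"
    "q < dim_col (mat_of_map m (EA m (\<lambda>j. if j = i then c else 0)))"
  then have p: "p < 2*m+1" and q: "q < 2*m+1" by (auto simp: mat_of_map_def)
  have hc: "2 * (half * c) = c" using h by (metis mult.assoc mult_1)
  have hc': "half * c * 2 = c" using hc by (simp add: mult.commute)
  show "F1 (2*m+1) i (- (half * c)) $$ (p, q) = mat_of_map m (EA m (\<lambda>j. if j = i then c else 0)) $$ (p, q)"
  proof -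
    have f1: "odd p \<Longrightarrow> (Suc (p div 2) = i) = (p = 2*i - 1)" using i by presburger
    have f2: "even q \<Longrightarrow> (q div 2 = i) = (q = 2*i)" using i by presburger
    have F: "F1 (2*m+1) i (- (half * c)) $$ (p, q) = (if p = q then 1 else 0) + (- (half * c)) *
       ((if p = 0 \<and> q = 2*i then 1 else 0) - 2 * (if p = 2*i - 1 \<and> q = 0 then 1 else 0)
        - (- (half * c)) * (if p = 2*i - 1 \<and> q = 2*i then 1 else 0))"
      using p q unfolding F1_def by (simp add: emat_idx)
    have E: "mat_of_map m (EA m (\<lambda>j. if j = i then c else 0)) $$ (p, q) = coord p (EA m (\<lambda>j. if j = i then c else 0) (basis_el q))"
      using p q by (simp add: mat_of_map_def)
    consider "p = 2*i - 1 \<and> q = 0" | "p = 0 \<and> q = 2*i" | "p = 2*i - 1 \<and> q = 2*i"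
      | "\<not> (p = 2*i - 1 \<and> q = 0)" "\<not> (p = 0 \<and> q = 2*i)" "\<not> (p = 2*i - 1 \<and> q = 2*i)" by blast
    then show ?thesis
    proof cases
      case 1
      then have "odd p" "p \<noteq> 0" "Suc (p div 2) = i" using i by presburger+
      then show ?thesis unfolding F E using 1 q hc hc' by (simp add: EA_entry)
    next
      case 2
      then have "even q" "q \<noteq> 0" "q div 2 = i" using i by presburger+
      then show ?thesis unfolding F E using 2 q hc by (simp add: EA_entry)
    next
      case 3
      then have "even q" "q \<noteq> 0" "q div 2 = i" "odd p" "p \<noteq> 0" "Suc (p div 2) = i" "p \<noteq> q" using i by presburger+
      then show ?thesis unfolding F E using 3 q hc by (simp add: EA_entry algebra_simps)
    next
      case 4
      have "coord p (EA m (\<lambda>j. if j = i then c else 0) (basis_el q)) = (if p = q then 1 else 0)"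
        using 4 q f1 f2 by (auto simp add: EA_entry)
      moreover have "(if p = 0 \<and> q = 2*i then 1 else 0) = (0::'a)" using 4(2) by (intro if_not_P)
      moreover have "(if p = 2*i - 1 \<and> q = 0 then 1 else 0) = (0::'a)" using 4(1) by (intro if_not_P)
      moreover have "(if p = 2*i - 1 \<and> q = 2*i then 1 else 0) = (0::'a)" using 4(3) by (intro if_not_P)
      ultimately show ?thesis unfolding F E by simp
    qed
  qed
qed (auto simp: F1_def mat_of_map_def)

lemma F2_EB:
  assumes h: "2 * half = (1::'a::comm_ring_1)" and i: "1 \<le> i" "i \<le> m"
  shows "F2 (2*m+1) i (- (half * c)) = mat_of_map m (EB m (\<lambda>j. if j = i then (c::'a) else 0))"
proof (rule eq_matI)
  fix p q assume "p < dim_row (mat_of_map m (EB m (\<lambda>j. if j = i then c else 0)))"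
    "q < dim_col (mat_of_map m (EB m (\<lambda>j. if j = i then c else 0)))"
  then have p: "p < 2*m+1" and q: "q < 2*m+1" by (auto simp: mat_of_map_def)
  have hc: "2 * (half * c) = c" using h by (metis mult.assoc mult_1)
  have hc': "half * c * 2 = c" using hc by (simp add: mult.commute)
  show "F2 (2*m+1) i (- (half * c)) $$ (p, q) = mat_of_map m (EB m (\<lambda>j. if j = i then c else 0)) $$ (p, q)"
  proof -
    have f1: "odd q \<Longrightarrow> (Suc (q div 2) = i) = (q = 2*i - 1)" using i by presburger
    have f2: "even p \<Longrightarrow> (p div 2 = i) = (p = 2*i)" using i by presburger
    have F: "F2 (2*m+1) i (- (half * c)) $$ (p, q) = (if p = q then 1 else 0) + (- (half * c)) *
       ((if p = 0 \<and> q = 2*i - 1 then 1 else 0) - 2 * (if p = 2*i \<and> q = 0 then 1 else 0)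
        - (- (half * c)) * (if p = 2*i \<and> q = 2*i - 1 then 1 else 0))"
      using p q unfolding F2_def by (simp add: emat_idx)
    have E: "mat_of_map m (EB m (\<lambda>j. if j = i then c else 0)) $$ (p, q) = coord p (EB m (\<lambda>j. if j = i then c else 0) (basis_el q))"
      using p q by (simp add: mat_of_map_def)
    consider "p = 2*i \<and> q = 0" | "p = 0 \<and> q = 2*i - 1" | "p = 2*i \<and> q = 2*i - 1"
      | "\<not> (p = 2*i \<and> q = 0)" "\<not> (p = 0 \<and> q = 2*i - 1)" "\<not> (p = 2*i \<and> q = 2*i - 1)" by blast
    then show ?thesis
    proof cases
      case 1
      then have "even p" "p \<noteq> 0" "p div 2 = i" using i by presburger+
      then show ?thesis unfolding F E using 1 q hc hc' by (simp add: EB_entry)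
    next
      case 2
      then have "odd q" "q \<noteq> 0" "Suc (q div 2) = i" using i by presburger+
      then show ?thesis unfolding F E using 2 q hc hc' by (simp add: EB_entry)
    next
      case 3
      then have "odd q" "q \<noteq> 0" "Suc (q div 2) = i" "even p" "p \<noteq> 0" "p div 2 = i" "p \<noteq> q" using i by presburger+
      then show ?thesis unfolding F E using 3 q hc by (simp add: EB_entry algebra_simps)
    next
      case 4
      have "coord p (EB m (\<lambda>j. if j = i then c else 0) (basis_el q)) = (if p = q then 1 else 0)"
        using 4 q f1 f2 by (auto simp add: EB_entry)
      moreover have "(if p = 0 \<and> q = 2*i - 1 then 1 else 0) = (0::'a)" using 4(2) by (intro if_not_P)
      moreover have "(if p = 2*i \<and> q = 0 then 1 else 0) = (0::'a)" using 4(1) by (intro if_not_P)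
      moreover have "(if p = 2*i \<and> q = 2*i - 1 then 1 else 0) = (0::'a)" using 4(3) by (intro if_not_P)
      ultimately show ?thesis unfolding F E by simp
    qed
  qed
qed (auto simp: F2_def mat_of_map_def)



definition SO :: "nat \<Rightarrow> 'a::comm_ring_1 set \<Rightarrow> 'a mat set" where
  "SO m J = {F1 (2*m+1) i l | i l. 1 \<le> i \<and> i \<le> m \<and> l \<in> J} \<union>
      {F2 (2*m+1) i l | i l. 1 \<le> i \<and> i \<le> m \<and> l \<in> J}"

definition SD :: "nat \<Rightarrow> 'a::comm_ring_1 set \<Rightarrow> 'a mat set" where
  "SD m J = {mat_of_map m (E_alpha m \<alpha>) | \<alpha>. lin_map m \<alpha> \<and> (\<forall>z i. \<alpha> z i \<in> J)} \<union>
      {mat_of_map m (E_beta m \<beta>) | \<beta>. lin_map m \<beta> \<and> (\<forall>z i. \<beta> z i \<in> J)}"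

lemma mat_carrier: "mat_of_map m \<phi> \<in> carrier_mat (2*m+1) (2*m+1)"
  by (simp add: mat_of_map_def)

lemma mat_id: "mat_of_map m id = 1\<^sub>m (2*m+1)"
proof (rule eq_matI)
  fix p q assume "p < dim_row (1\<^sub>m (2 * m + 1))" "q < dim_col (1\<^sub>m (2 * m + 1) :: 'a mat)"
  then have p: "p < 2*m+1" and q: "q < 2*m+1" by auto
  have "coord p (basis_el q :: 'a qelem) = (if p = q then 1 else 0)"
  proof -
    have f1: "odd p \<Longrightarrow> odd q \<Longrightarrow> (Suc (p div 2) = Suc (q div 2)) = (p = q)" by presburger
    have f2: "even p \<Longrightarrow> even q \<Longrightarrow> p \<noteq> 0 \<Longrightarrow> q \<noteq> 0 \<Longrightarrow> (p div 2 = q div 2) = (p = q)" by presburger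
    show ?thesis using f1 f2 by (auto simp: basis_el_def coord_alt)
  qed
  then show "mat_of_map m id $$ (p, q) = (1\<^sub>m (2 * m + 1) :: 'a mat) $$ (p, q)"
    using p q by (simp add: mat_of_map_def)
qed (auto simp: mat_of_map_def)

lemma qlin_comp: "qlin f \<Longrightarrow> qlin g \<Longrightarrow> qlin (f \<circ> g)"
  unfolding qlin_def comp_def by metis

lemma mat_comp_EA: "qlin \<phi> \<Longrightarrow> b \<in> Pm m \<Longrightarrow> mat_of_map m (\<phi> \<circ> EA m b) = mat_of_map m \<phi> * mat_of_map m (EA m b)"
  by (rule mat_mult) (auto intro!: EA_M basis_M)

lemma mat_comp_EB: "qlin \<phi> \<Longrightarrow> b \<in> Pm m \<Longrightarrow> mat_of_map m (\<phi> \<circ> EB m b) = mat_of_map m \<phi> * mat_of_map m (EB m b)"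
  by (rule mat_mult) (auto intro!: EB_M basis_M)

lemma EA_zero: "EA m (\<lambda>_. 0) = id"
  by (rule ext) (simp add: EA_def pair_zero_r)

lemma EB_zero: "EB m (\<lambda>_. 0) = id"
  by (rule ext) (simp add: EB_def pair_zero_l)

lemma EA_inv0:
  assumes h: "2 * half = (1::'a::comm_ring_1)"
  shows "EA m a \<circ> EA m (\<lambda>j. - (a j :: 'a)) = id"
proof (rule ext)
  fix v :: "'a qelem"
  obtain z u g where v: "v = (z, u, g)" by (cases v)
  have y: "fst (snd ((EA m a \<circ> EA m (\<lambda>j. - (a j :: 'a))) (z, u, g))) i = u i" for i
    unfolding EA_def comp_def fst_conv snd_conv pair_lin
    apply (rule eq_by_h[OF h, where C = "- (half * pair m g a * a i)"])
    by (simp add: algebra_simps)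
  have zz: "fst ((EA m a \<circ> EA m (\<lambda>j. - (a j :: 'a))) (z, u, g)) = z"
    unfolding EA_def comp_def fst_conv snd_conv pair_lin by (simp add: algebra_simps)
  show "(EA m a \<circ> EA m (\<lambda>j. - a j)) v = id v"
    unfolding v using y zz by (simp add: prod_eq_iff fun_eq_iff EA_def)
qed

lemma EB_inv0:
  assumes h: "2 * half = (1::'a::comm_ring_1)"
  shows "EB m a \<circ> EB m (\<lambda>j. - (a j :: 'a)) = id"
proof (rule ext)
  fix v :: "'a qelem"
  obtain z u g where v: "v = (z, u, g)" by (cases v)
  have y: "snd (snd ((EB m a \<circ> EB m (\<lambda>j. - (a j :: 'a))) (z, u, g))) i = g i" for i
    unfolding EB_def comp_def fst_conv snd_conv pair_lin
    apply (rule eq_by_h[OF h, where C = "- (half * pair m a u * a i)"])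
    by (simp add: algebra_simps)
  have zz: "fst ((EB m a \<circ> EB m (\<lambda>j. - (a j :: 'a))) (z, u, g)) = z"
    unfolding EB_def comp_def fst_conv snd_conv pair_lin by (simp add: algebra_simps)
  show "(EB m a \<circ> EB m (\<lambda>j. - a j)) v = id v"
    unfolding v using y zz by (simp add: prod_eq_iff fun_eq_iff EB_def)
qed

lemma gg_gen: "A \<in> S \<Longrightarrow> A \<in> carrier_mat n n \<Longrightarrow> A \<in> gen_grp n S"
  using gen_grp.gen_mul[of A S "1\<^sub>m n" n] gen_grp.gen_one[of n S] by simp

lemma Pm_neg: "(a::nat \<Rightarrow> 'a::comm_ring_1) \<in> Pm m \<Longrightarrow> (\<lambda>j. - a j) \<in> Pm m" by (simp add: Pm_def)
lemma Pm_sc: "(a::nat \<Rightarrow> 'a::comm_ring_1) \<in> Pm m \<Longrightarrow> (\<lambda>j. c * a j) \<in> Pm m" by (simp add: Pm_def)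
lemma Pm_e: "1 \<le> i \<Longrightarrow> i \<le> m \<Longrightarrow> (\<lambda>j. if j = i then (c::'a::comm_ring_1) else 0) \<in> Pm m" by (simp add: Pm_def)

lemma EA_invertible:
  fixes a :: "nat \<Rightarrow> 'a::comm_ring_1"
  assumes h: "2 * half = (1::'a::comm_ring_1)" and a: "a \<in> Pm m"
  shows "\<exists>B\<in>carrier_mat (2*m+1) (2*m+1). mat_of_map m (EA m a) * B = 1\<^sub>m (2*m+1) \<and> B * mat_of_map m (EA m a) = 1\<^sub>m (2*m+1)"
proof (intro bexI conjI)
  show "mat_of_map m (EA m a) * mat_of_map m (EA m (\<lambda>j. - a j)) = 1\<^sub>m (2*m+1)"
    using mat_comp_EA[OF qlin_EA Pm_neg[OF a], of m a] EA_inv0[OF h, of m a] mat_id by metis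
  have "EA m (\<lambda>j. - a j) \<circ> EA m a = id" using EA_inv0[OF h, of m "\<lambda>j. - a j"] by simp
  then show "mat_of_map m (EA m (\<lambda>j. - a j)) * mat_of_map m (EA m a) = 1\<^sub>m (2*m+1)"
    using mat_comp_EA[OF qlin_EA a, of m "\<lambda>j. - a j"] mat_id by metis
qed (rule mat_carrier)

lemma EB_invertible:
  fixes a :: "nat \<Rightarrow> 'a::comm_ring_1"
  assumes h: "2 * half = (1::'a::comm_ring_1)" and a: "a \<in> Pm m"
  shows "\<exists>B\<in>carrier_mat (2*m+1) (2*m+1). mat_of_map m (EB m a) * B = 1\<^sub>m (2*m+1) \<and> B * mat_of_map m (EB m a) = 1\<^sub>m (2*m+1)"
proof (intro bexI conjI)
  show "mat_of_map m (EB m a) * mat_of_map m (EB m (\<lambda>j. - a j)) = 1\<^sub>m (2*m+1)"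
    using mat_comp_EB[OF qlin_EB Pm_neg[OF a], of m a] EB_inv0[OF h, of m a] mat_id by metis
  have "EB m (\<lambda>j. - a j) \<circ> EB m a = id" using EB_inv0[OF h, of m "\<lambda>j. - a j"] by simp
  then show "mat_of_map m (EB m (\<lambda>j. - a j)) * mat_of_map m (EB m a) = 1\<^sub>m (2*m+1)"
    using mat_comp_EB[OF qlin_EB a, of m "\<lambda>j. - a j"] mat_id by metis
qed (rule mat_carrier)

lemma F1_alt:
  assumes h: "2 * half = (1::'a::comm_ring_1)" and i: "1 \<le> i" "i \<le> m"
  shows "F1 (2*m+1) i l = mat_of_map m (EA m (\<lambda>j. if j = i then - (2 * l) else (0::'a)))"
proof -
  have "l = - (half * (- (2 * l)))" using h by (metis minus_minus mult.assoc mult.commute mult_1 mult_minus_right)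
  then show ?thesis using F1_EA[OF h i, of "- (2 * l)"] by simp
qed

lemma F2_alt:
  assumes h: "2 * half = (1::'a::comm_ring_1)" and i: "1 \<le> i" "i \<le> m"
  shows "F2 (2*m+1) i l = mat_of_map m (EB m (\<lambda>j. if j = i then - (2 * l) else (0::'a)))"
proof -
  have "l = - (half * (- (2 * l)))" using h by (metis minus_minus mult.assoc mult.commute mult_1 mult_minus_right)
  then show ?thesis using F2_EB[OF h i, of "- (2 * l)"] by simp
qed

lemma invset_SO:
  assumes h: "2 * half = (1::'a::comm_ring_1)"
  shows "invset (2*m+1) (SO m (J::'a set))"
  unfolding invset_def
proof (intro conjI ballI)
  show "SO m J \<subseteq> carrier_mat (2 * m + 1) (2 * m + 1)"
    unfolding SO_def by (auto simp: F1_def F2_def)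
next
  fix A assume "A \<in> SO m J"
  then consider i l where "1 \<le> i" "i \<le> m" "A = F1 (2*m+1) i l" | i l where "1 \<le> i" "i \<le> m" "A = F2 (2*m+1) i l"
    unfolding SO_def by blast
  then show "\<exists>B\<in>carrier_mat (2 * m + 1) (2 * m + 1). A * B = 1\<^sub>m (2 * m + 1) \<and> B * A = 1\<^sub>m (2 * m + 1)"
  proof cases
    case (1 i l)
    show ?thesis unfolding 1(3) F1_alt[OF h 1(1,2)] by (rule EA_invertible[OF h Pm_e[OF 1(1,2)]])
  next
    case (2 i l)
    show ?thesis unfolding 2(3) F2_alt[OF h 2(1,2)] by (rule EB_invertible[OF h Pm_e[OF 2(1,2)]])
  qed
qed

lemma ideal_mult: "is_ideal J \<Longrightarrow> x \<in> J \<Longrightarrow> r * x \<in> J"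
  unfolding is_ideal_def by blast
lemma ideal_0: "is_ideal J \<Longrightarrow> 0 \<in> J"
  unfolding is_ideal_def by blast
lemma ideal_neg: "is_ideal J \<Longrightarrow> x \<in> J \<Longrightarrow> - x \<in> J"
  using ideal_mult[of J x "-1"] by simp

lemma SO_carrier: "SO m J \<subseteq> carrier_mat (2*m+1) (2*m+1)"
  unfolding SO_def by (auto simp: F1_def F2_def)

lemma F1_SO: "1 \<le> i \<Longrightarrow> i \<le> m \<Longrightarrow> l \<in> J \<Longrightarrow> F1 (2*m+1) i l \<in> SO m J"
  unfolding SO_def
  apply (rule UnI1)
  apply (rule CollectI)
  apply (rule exI[of _ i])
  apply (rule exI[of _ l])
  apply simp
  done
lemma F2_SO: "1 \<le> i \<Longrightarrow> i \<le> m \<Longrightarrow> l \<in> J \<Longrightarrow> F2 (2*m+1) i l \<in> SO m J"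
  unfolding SO_def
  apply (rule UnI2)
  apply (rule CollectI)
  apply (rule exI[of _ i])
  apply (rule exI[of _ l])
  apply simp
  done

lemma single_EA:
  assumes h: "2 * half = (1::'a::comm_ring_1)" and J: "is_ideal J" and i: "1 \<le> i" "i \<le> m" and c: "c \<in> J"
  shows "mat_of_map m (EA m (\<lambda>j. if j = i then (c::'a) else 0)) \<in> gen_grp (2*m+1) (SO m J)"
proof -
  have l: "- (half * c) \<in> J" using ideal_mult[OF J c, of "- half"] by simp
  have "F1 (2*m+1) i (- (half * c)) \<in> SO m J" by (rule F1_SO[OF i l])
  moreover have "F1 (2*m+1) i (- (half * c)) \<in> carrier_mat (2*m+1) (2*m+1)" using calculation SO_carrier by blast
  ultimately have "F1 (2*m+1) i (- (half * c)) \<in> gen_grp (2*m+1) (SO m J)" by (rule gg_gen)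
  then show ?thesis using F1_EA[OF h i, of c] by simp
qed

lemma single_EB:
  assumes h: "2 * half = (1::'a::comm_ring_1)" and J: "is_ideal J" and i: "1 \<le> i" "i \<le> m" and c: "c \<in> J"
  shows "mat_of_map m (EB m (\<lambda>j. if j = i then (c::'a) else 0)) \<in> gen_grp (2*m+1) (SO m J)"
proof -
  have l: "- (half * c) \<in> J" using ideal_mult[OF J c, of "- half"] by simp
  have "F2 (2*m+1) i (- (half * c)) \<in> SO m J" by (rule F2_SO[OF i l])
  moreover have "F2 (2*m+1) i (- (half * c)) \<in> carrier_mat (2*m+1) (2*m+1)" using calculation SO_carrier by blast
  ultimately have "F2 (2*m+1) i (- (half * c)) \<in> gen_grp (2*m+1) (SO m J)" by (rule gg_gen)
  then show ?thesis using F2_EB[OF h i, of c] by simp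
qed

lemma EA_in:
  fixes J :: "'a::comm_ring_1 set"
  assumes h: "2 * half = (1::'a)" and J: "is_ideal J"
  shows "k \<le> m \<Longrightarrow> a \<in> Pm m \<Longrightarrow> (\<forall>j>k. a j = 0) \<Longrightarrow> (\<forall>j. a j \<in> J) \<Longrightarrow>
    mat_of_map m (EA m a) \<in> gen_grp (2*m+1) (SO m J)"
proof (induction k arbitrary: a)
  case 0
  have "a = (\<lambda>_. 0)"
  proof
    fix j show "a j = 0" using 0 by (cases "j = 0") (auto simp: Pm_def)
  qed
  then have "mat_of_map m (EA m a) = 1\<^sub>m (2*m+1)" by (simp only: EA_zero mat_id)
  then show ?case using gen_grp.gen_one by simp
next
  case (Suc k)
  define c where "c = a (Suc k)"
  define x where "x = (\<lambda>j. if j = Suc k then 0 else a j)"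
  define y where "y = (\<lambda>j. if j = Suc k then c else 0)"
  have a: "a = (\<lambda>j. x j + y j)" unfolding x_def y_def c_def by auto
  have y1: "(\<lambda>j. half * y j) = (\<lambda>j. if j = Suc k then half * c else 0)" unfolding y_def by auto
  have y2: "(\<lambda>j. - (half * y j)) = (\<lambda>j. if j = Suc k then - (half * c) else 0)" unfolding y_def by auto
  have dec: "EA m a = EA m x \<circ> EA m y \<circ> EA m (\<lambda>j. if j = Suc k then half * c else 0) \<circ> EA m x
     \<circ> EA m (\<lambda>j. if j = Suc k then - (half * c) else 0) \<circ> EA m (\<lambda>j. - x j)"
    unfolding a EA_decomp[OF h] y1 y2 ..
  have i: "1 \<le> Suc k" "Suc k \<le> m" using Suc by auto
  have c0: "c \<in> J" using Suc(5) unfolding c_def by blast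
  have cJ: "c \<in> J" "half * c \<in> J" "- (half * c) \<in> J"
    using c0 ideal_mult[OF J c0, of half] ideal_neg[OF J ideal_mult[OF J c0, of half]] by auto
  have xP: "x \<in> Pm m" "(\<lambda>j. - x j) \<in> Pm m" using Suc(3) unfolding x_def Pm_def by auto
  have x0: "\<forall>j>k. x j = 0" "\<forall>j>k. - x j = 0" using Suc(4) unfolding x_def by auto
  have xJ: "\<forall>j. x j \<in> J" "\<forall>j. - x j \<in> J" using Suc(5) ideal_0[OF J] ideal_neg[OF J, of 0] ideal_neg[OF J, of "a _"] unfolding x_def by auto
  have g1: "mat_of_map m (EA m x) \<in> gen_grp (2*m+1) (SO m J)"
    using Suc(1)[of x] Suc(2) xP x0 xJ by auto
  have g6: "mat_of_map m (EA m (\<lambda>j. - x j)) \<in> gen_grp (2*m+1) (SO m J)"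
    using Suc(1)[of "\<lambda>j. - x j"] Suc(2) xP x0 xJ by auto
  have g2: "mat_of_map m (EA m y) \<in> gen_grp (2*m+1) (SO m J)"
    unfolding y_def by (rule single_EA[OF h J i cJ(1)])
  have g3: "mat_of_map m (EA m (\<lambda>j. if j = Suc k then half * c else 0)) \<in> gen_grp (2*m+1) (SO m J)"
    by (rule single_EA[OF h J i cJ(2)])
  have g5: "mat_of_map m (EA m (\<lambda>j. if j = Suc k then - (half * c) else 0)) \<in> gen_grp (2*m+1) (SO m J)"
    by (rule single_EA[OF h J i cJ(3)])
  have yP: "y \<in> Pm m" "(\<lambda>j. if j = Suc k then half * c else 0) \<in> Pm m"
    "(\<lambda>j. if j = Suc k then - (half * c) else 0) \<in> Pm m"
    unfolding y_def using Pm_e[OF i] by auto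
  have L: "qlin (EA m x \<circ> EA m y \<circ> EA m (\<lambda>j. if j = Suc k then half * c else 0) \<circ> EA m x
     \<circ> EA m (\<lambda>j. if j = Suc k then - (half * c) else 0))"
    "qlin (EA m x \<circ> EA m y \<circ> EA m (\<lambda>j. if j = Suc k then half * c else 0) \<circ> EA m x)"
    "qlin (EA m x \<circ> EA m y \<circ> EA m (\<lambda>j. if j = Suc k then half * c else 0))"
    "qlin (EA m x \<circ> EA m y)"
    by (intro qlin_comp qlin_EA)+
  have eq: "mat_of_map m (EA m a) = mat_of_map m (EA m x) * mat_of_map m (EA m y)
      * mat_of_map m (EA m (\<lambda>j. if j = Suc k then half * c else 0)) * mat_of_map m (EA m x)
      * mat_of_map m (EA m (\<lambda>j. if j = Suc k then - (half * c) else 0)) * mat_of_map m (EA m (\<lambda>j. - x j))"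
    unfolding dec
    by (simp only: mat_comp_EA[OF L(1) xP(2)] mat_comp_EA[OF L(2) yP(3)] mat_comp_EA[OF L(3) xP(1)]
        mat_comp_EA[OF L(4) yP(2)] mat_comp_EA[OF qlin_EA yP(1)])
  show ?case unfolding eq by (intro gg_mult[OF SO_carrier] g1 g2 g3 g5 g6)
qed


lemma EB_in:
  fixes J :: "'a::comm_ring_1 set"
  assumes h: "2 * half = (1::'a)" and J: "is_ideal J"
  shows "k \<le> m \<Longrightarrow> a \<in> Pm m \<Longrightarrow> (\<forall>j>k. a j = 0) \<Longrightarrow> (\<forall>j. a j \<in> J) \<Longrightarrow>
    mat_of_map m (EB m a) \<in> gen_grp (2*m+1) (SO m J)"
proof (induction k arbitrary: a)
  case 0
  have "a = (\<lambda>_. 0)"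
  proof
    fix j show "a j = 0" using 0 by (cases "j = 0") (auto simp: Pm_def)
  qed
  then have "mat_of_map m (EB m a) = 1\<^sub>m (2*m+1)" by (simp only: EB_zero mat_id)
  then show ?case using gen_grp.gen_one by simp
next
  case (Suc k)
  define c where "c = a (Suc k)"
  define x where "x = (\<lambda>j. if j = Suc k then 0 else a j)"
  define y where "y = (\<lambda>j. if j = Suc k then c else 0)"
  have a: "a = (\<lambda>j. x j + y j)" unfolding x_def y_def c_def by auto
  have y1: "(\<lambda>j. half * y j) = (\<lambda>j. if j = Suc k then half * c else 0)" unfolding y_def by auto
  have y2: "(\<lambda>j. - (half * y j)) = (\<lambda>j. if j = Suc k then - (half * c) else 0)" unfolding y_def by auto
  have dec: "EB m a = EB m x \<circ> EB m y \<circ> EB m (\<lambda>j. if j = Suc k then half * c else 0) \<circ> EB m x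
     \<circ> EB m (\<lambda>j. if j = Suc k then - (half * c) else 0) \<circ> EB m (\<lambda>j. - x j)"
    unfolding a EB_decomp[OF h] y1 y2 ..
  have i: "1 \<le> Suc k" "Suc k \<le> m" using Suc by auto
  have c0: "c \<in> J" using Suc(5) unfolding c_def by blast
  have cJ: "c \<in> J" "half * c \<in> J" "- (half * c) \<in> J"
    using c0 ideal_mult[OF J c0, of half] ideal_neg[OF J ideal_mult[OF J c0, of half]] by auto
  have xP: "x \<in> Pm m" "(\<lambda>j. - x j) \<in> Pm m" using Suc(3) unfolding x_def Pm_def by auto
  have x0: "\<forall>j>k. x j = 0" "\<forall>j>k. - x j = 0" using Suc(4) unfolding x_def by auto
  have xJ: "\<forall>j. x j \<in> J" "\<forall>j. - x j \<in> J" using Suc(5) ideal_0[OF J] ideal_neg[OF J, of 0] ideal_neg[OF J, of "a _"] unfolding x_def by auto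
  have g1: "mat_of_map m (EB m x) \<in> gen_grp (2*m+1) (SO m J)"
    using Suc(1)[of x] Suc(2) xP x0 xJ by auto
  have g6: "mat_of_map m (EB m (\<lambda>j. - x j)) \<in> gen_grp (2*m+1) (SO m J)"
    using Suc(1)[of "\<lambda>j. - x j"] Suc(2) xP x0 xJ by auto
  have g2: "mat_of_map m (EB m y) \<in> gen_grp (2*m+1) (SO m J)"
    unfolding y_def by (rule single_EB[OF h J i cJ(1)])
  have g3: "mat_of_map m (EB m (\<lambda>j. if j = Suc k then half * c else 0)) \<in> gen_grp (2*m+1) (SO m J)"
    by (rule single_EB[OF h J i cJ(2)])
  have g5: "mat_of_map m (EB m (\<lambda>j. if j = Suc k then - (half * c) else 0)) \<in> gen_grp (2*m+1) (SO m J)"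
    by (rule single_EB[OF h J i cJ(3)])
  have yP: "y \<in> Pm m" "(\<lambda>j. if j = Suc k then half * c else 0) \<in> Pm m"
    "(\<lambda>j. if j = Suc k then - (half * c) else 0) \<in> Pm m"
    unfolding y_def using Pm_e[OF i] by auto
  have L: "qlin (EB m x \<circ> EB m y \<circ> EB m (\<lambda>j. if j = Suc k then half * c else 0) \<circ> EB m x
     \<circ> EB m (\<lambda>j. if j = Suc k then - (half * c) else 0))"
    "qlin (EB m x \<circ> EB m y \<circ> EB m (\<lambda>j. if j = Suc k then half * c else 0) \<circ> EB m x)"
    "qlin (EB m x \<circ> EB m y \<circ> EB m (\<lambda>j. if j = Suc k then half * c else 0))"
    "qlin (EB m x \<circ> EB m y)"
    by (intro qlin_comp qlin_EB)+
  have eq: "mat_of_map m (EB m a) = mat_of_map m (EB m x) * mat_of_map m (EB m y)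
      * mat_of_map m (EB m (\<lambda>j. if j = Suc k then half * c else 0)) * mat_of_map m (EB m x)
      * mat_of_map m (EB m (\<lambda>j. if j = Suc k then - (half * c) else 0)) * mat_of_map m (EB m (\<lambda>j. - x j))"
    unfolding dec
    by (simp only: mat_comp_EB[OF L(1) xP(2)] mat_comp_EB[OF L(2) yP(3)] mat_comp_EB[OF L(3) xP(1)]
        mat_comp_EB[OF L(4) yP(2)] mat_comp_EB[OF qlin_EB yP(1)])
  show ?case unfolding eq by (intro gg_mult[OF SO_carrier] g1 g2 g3 g5 g6)
qed


lemma SD_sub:
  fixes J :: "'a::comm_ring_1 set"
  assumes h: "2 * half = (1::'a)" and J: "is_ideal J"
  shows "SD m J \<subseteq> gen_grp (2*m+1) (SO m J)"
proof
  fix A assume "A \<in> SD m J"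
  then consider \<alpha> where "A = mat_of_map m (E_alpha m \<alpha>)" "lin_map m \<alpha>" "\<forall>z i. \<alpha> z i \<in> J"
    | \<beta> where "A = mat_of_map m (E_beta m \<beta>)" "lin_map m \<beta>" "\<forall>z i. \<beta> z i \<in> J"
    unfolding SD_def by blast
  then show "A \<in> gen_grp (2*m+1) (SO m J)"
  proof cases
    case (1 \<alpha>)
    have P: "\<alpha> 1 \<in> Pm m" using 1(2) unfolding lin_map_def by blast
    then have "\<forall>j>m. \<alpha> 1 j = 0" unfolding Pm_def by auto
    then show ?thesis unfolding 1(1) E_alpha_EA[OF h 1(2)]
      using EA_in[OF h J, of m m "\<alpha> 1"] P 1(3) by blast
  next
    case (2 \<beta>)
    have P: "\<beta> 1 \<in> Pm m" using 2(2) unfolding lin_map_def by blast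
    then have "\<forall>j>m. \<beta> 1 j = 0" unfolding Pm_def by auto
    then show ?thesis unfolding 2(1) E_beta_EB[OF h 2(2)]
      using EB_in[OF h J, of m m "\<beta> 1"] P 2(3) by blast
  qed
qed

lemma SO_sub:
  fixes J :: "'a::comm_ring_1 set"
  assumes h: "2 * half = (1::'a)" and J: "is_ideal J"
  shows "SO m J \<subseteq> SD m J"
proof
  fix A assume "A \<in> SO m J"
  then consider i l where "1 \<le> i" "i \<le> m" "l \<in> J" "A = F1 (2*m+1) i l" | i l where "1 \<le> i" "i \<le> m" "l \<in> J" "A = F2 (2*m+1) i l"
    unfolding SO_def by blast
  then show "A \<in> SD m J"
  proof cases
    case (1 i l)
    define \<alpha> where "\<alpha> = (\<lambda>z::'a. \<lambda>j. if j = i then z * (- (2 * l)) else 0)"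
    have lin: "lin_map m \<alpha>" unfolding lin_map_def \<alpha>_def Pm_def using 1 by (auto simp: algebra_simps)
    have inJ: "\<forall>z j. \<alpha> z j \<in> J"
    proof (intro allI)
      fix z j
      have e: "z * (- (2 * l)) = (- (2 * z)) * l" by (simp add: algebra_simps)
      have mm: "z * (- (2 * l)) \<in> J" using e ideal_mult[OF J 1(3), of "- (2 * z)"] by metis
      show "\<alpha> z j \<in> J" unfolding \<alpha>_def using ideal_0[OF J] mm by simp
    qed
    have a1: "\<alpha> 1 = (\<lambda>j. if j = i then - (2 * l) else 0)" unfolding \<alpha>_def by (rule ext) (simp only: mult_1_left)
    have "A = mat_of_map m (E_alpha m \<alpha>)" unfolding 1(4) F1_alt[OF h 1(1,2)] E_alpha_EA[OF h lin] a1 ..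
    then show ?thesis unfolding SD_def using lin inJ by blast
  next
    case (2 i l)
    define \<beta> where "\<beta> = (\<lambda>z::'a. \<lambda>j. if j = i then z * (- (2 * l)) else 0)"
    have lin: "lin_map m \<beta>" unfolding lin_map_def \<beta>_def Pm_def using 2 by (auto simp: algebra_simps)
    have inJ: "\<forall>z j. \<beta> z j \<in> J"
    proof (intro allI)
      fix z j
      have e: "z * (- (2 * l)) = (- (2 * z)) * l" by (simp add: algebra_simps)
      have mm: "z * (- (2 * l)) \<in> J" using e ideal_mult[OF J 2(3), of "- (2 * z)"] by metis
      show "\<beta> z j \<in> J" unfolding \<beta>_def using ideal_0[OF J] mm by simp
    qed
    have a1: "\<beta> 1 = (\<lambda>j. if j = i then - (2 * l) else 0)" unfolding \<beta>_def by (rule ext) (simp only: mult_1_left)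
    have "A = mat_of_map m (E_beta m \<beta>)" unfolding 2(4) F2_alt[OF h 2(1,2)] E_beta_EB[OF h lin] a1 ..
    then show ?thesis unfolding SD_def using lin inJ by blast
  qed
qed

lemma SD_carrier: "SD m J \<subseteq> carrier_mat (2*m+1) (2*m+1)"
  unfolding SD_def using mat_carrier by blast

lemma EO_eq:
  fixes J :: "'a::comm_ring_1 set"
  assumes h: "2 * half = (1::'a)" and J: "is_ideal J"
  shows "EO_DSER m J = EO_odd m J"
proof -
  have D: "EO_DSER m J = gen_grp (2*m+1) (SD m J)" unfolding EO_DSER_def SD_def ..
  have O: "EO_odd m J = gen_grp (2*m+1) (SO m J)" unfolding EO_odd_def SO_def ..
  show ?thesis unfolding D O
    using gg_sub[OF invset_SO[OF h] SD_sub[OF h J] SD_carrier] gg_mono[OF SO_sub[OF h J]] by blast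
qed

theorem mainTheorem5:
  fixes I :: "'a::comm_ring_1 set" and m :: nat
  assumes two_inv: "\<exists>u::'a. 2 * u = 1"
    and ideal: "is_ideal I"
    and m: "m \<ge> 1"
  shows "EO_DSER_rel m I = EO_odd_rel m I"
proof -
  have h: "2 * half = (1::'a)" by (rule half_eq[OF two_inv])
  have U: "is_ideal (UNIV :: 'a set)" unfolding is_ideal_def by simp
  show ?thesis unfolding EO_DSER_rel_def EO_odd_rel_def EO_eq[OF h ideal] EO_eq[OF h U] ..
qed


end
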